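(* Suppose a group $G$ admits a $\mathscr{Z}$-structure $(\overline{X},Z)$. Then $\overline{X}$ is a controlled $\mathscr{Z}$-compactification of $X=\overline{X}- Z$.
   Context: A closed subset $A$ of an ANR $Y$ is a $\mathscr{Z}$-set if there is a homotopy $H:Y\times[0,1]\to Y$ with $H_0=\mathrm{id}_Y$ and $H_t(Y)\subset Y- A$ for every $t>0$. A $\mathscr{Z}$-structure on a group $G$ is a pair of spaces $(\overline{X},Z)$ such that: (1) $\overline{X}$ is a compact AR; (2) $Z$ is a $\mathscr{Z}$-set in $\overline{X}$; (3) $X=\overline{X}- Z$ is a proper metric space (metric $d$) on which $G$ acts properly, cocompactly, by isometries; (4) (nullity condition) for every compact $C\subseteq X$ and every open cover $\mathscr{U}$ of $\overline{X}$, all but finitely many $G$-translates of $C$ lie in some element of $\mathscr{U}$. A controlled $\mathscr{Z}$-compactification of a proper metric space $(X,d)$ is a compactification $\overline{X}=X\cup Z$ (with some metric $\overline{d}$ inducing the topology of $\overline{X}$) such that (i) $Z$ is a $\mathscr{Z}$-set in $\overline{X}$, and (ii) for every $\epsilon>0$ and $R>0$ there is a compact $K\subset X$ such that every ball of radius $R$ in $(X,d)$ not intersecting $K$ has $\overline{d}$-diameter less than $\epsilon$. *)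

theory Defs
  imports "HOL-Analysis.Analysis" "HOL-Algebra.Group_Action"
begin

text \<open>Test spaces are the
metrizable topologies on the type nat => real (which has the cardinality of the
continuum, so every separable metrizable space occurs up to homeomorphism).\<close>

definition ANR :: "'a topology \<Rightarrow> bool" where
  "ANR X \<longleftrightarrow> metrizable_space X \<and>
     (\<forall>(Y :: (nat \<Rightarrow> real) topology) f.
        metrizable_space Y \<and> embedding_map X Y f \<and> closedin Y (f ` topspace X) \<longrightarrow>
        (\<exists>U. openin Y U \<and> (f ` topspace X) retract_of_space (subtopology Y U)))"

definition AR :: "'a topology \<Rightarrow> bool" where
  "AR X \<longleftrightarrow> metrizable_space X \<and>
     (\<forall>(Y :: (nat \<Rightarrow> real) topology) f.
        metrizable_space Y \<and> embedding_map X Y f \<and> closedin Y (f ` topspace X) \<longrightarrow>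
        (f ` topspace X) retract_of_space Y)"

definition Zset :: "'a topology \<Rightarrow> 'a set \<Rightarrow> bool" where
  "Zset Y A \<longleftrightarrow> ANR Y \<and> closedin Y A \<and>
     (\<exists>H. continuous_map (prod_topology Y (top_of_set {0..1::real})) Y H \<and>
          (\<forall>x\<in>topspace Y. H (x, 0) = x) \<and>
          (\<forall>t\<in>{0<..1::real}. \<forall>x\<in>topspace Y. H (x, t) \<in> topspace Y - A))"

definition proper_metric_space :: "'a set \<Rightarrow> ('a \<Rightarrow> 'a \<Rightarrow> real) \<Rightarrow> bool" where
  "proper_metric_space M d \<longleftrightarrow> Metric_space M d \<and>
     (\<forall>x\<in>M. \<forall>r. compactin (Metric_space.mtopology M d) (Metric_space.mcball M d x r))"

definition Z_structure ::
  "('g, 'b) monoid_scheme \<Rightarrow> ('g \<Rightarrow> 'a \<Rightarrow> 'a) \<Rightarrow> 'a topology \<Rightarrow> 'a set \<Rightarrow> ('a \<Rightarrow> 'a \<Rightarrow> real) \<Rightarrow> bool"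
where
  "Z_structure G \<phi> Xbar Z d \<longleftrightarrow>
     (let X = topspace Xbar - Z in
       compact_space Xbar \<and> AR Xbar \<and>
       Z \<subseteq> topspace Xbar \<and> Zset Xbar Z \<and>
       proper_metric_space X d \<and>
       Metric_space.mtopology X d = subtopology Xbar X \<and>
       group G \<and> group_action G X \<phi> \<and>
       (\<forall>g\<in>carrier G. \<forall>x\<in>X. \<forall>y\<in>X. d (\<phi> g x) (\<phi> g y) = d x y) \<and>
       (\<forall>K. compactin (subtopology Xbar X) K \<longrightarrow>
            finite {g \<in> carrier G. \<phi> g ` K \<inter> K \<noteq> {}}) \<and>
       (\<exists>K. compactin (subtopology Xbar X) K \<and> (\<Union>g\<in>carrier G. \<phi> g ` K) = X) \<and>
       (\<forall>C \<U>. compactin (subtopology Xbar X) C \<and> (\<forall>U\<in>\<U>. openin Xbar U) \<and>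
              \<Union>\<U> = topspace Xbar \<longrightarrow>
              finite {g \<in> carrier G. \<not> (\<exists>U\<in>\<U>. \<phi> g ` C \<subseteq> U)}))"

definition controlled_Z_compactification ::
  "'a topology \<Rightarrow> 'a set \<Rightarrow> ('a \<Rightarrow> 'a \<Rightarrow> real) \<Rightarrow> bool"
where
  "controlled_Z_compactification Xbar Z d \<longleftrightarrow>
     (let X = topspace Xbar - Z in
       proper_metric_space X d \<and>
       compact_space Xbar \<and> Z \<subseteq> topspace Xbar \<and>
       Metric_space.mtopology X d = subtopology Xbar X \<and>
       Xbar closure_of X = topspace Xbar \<and>
       Zset Xbar Z \<and>
       (\<exists>dbar. Metric_space (topspace Xbar) dbar \<and>
              Metric_space.mtopology (topspace Xbar) dbar = Xbar \<and>
              (\<forall>\<epsilon>>0. \<forall>R>0. \<exists>K. compactin (subtopology Xbar X) K \<and>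
                 (\<forall>x\<in>X. Metric_space.mball X d x R \<inter> K = {} \<longrightarrow>
                    (\<exists>\<delta><\<epsilon>. \<forall>y\<in>Metric_space.mball X d x R.
                        \<forall>z\<in>Metric_space.mball X d x R. dbar y z \<le> \<delta>)))))"

end

theory Submission
  imports Defs
begin

lemma closure_part:
  assumes Z: "Zset Xbar Z"
  shows "Xbar closure_of (topspace Xbar - Z) = topspace Xbar"
proof -
  obtain H where Hc: "continuous_map (prod_topology Xbar (top_of_set {0..1::real})) Xbar H"
    and H0: "\<forall>x\<in>topspace Xbar. H (x, 0) = x"
    and Ht: "\<forall>t\<in>{0<..1::real}. \<forall>x\<in>topspace Xbar. H (x, t) \<in> topspace Xbar - Z"
    using Z unfolding Zset_def by blast
  show ?thesis
  proof (rule subset_antisym)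
    show "Xbar closure_of (topspace Xbar - Z) \<subseteq> topspace Xbar"
      by (rule closure_of_subset_topspace)
  next
    show "topspace Xbar \<subseteq> Xbar closure_of (topspace Xbar - Z)"
    proof
      fix z assume z: "z \<in> topspace Xbar"
      show "z \<in> Xbar closure_of (topspace Xbar - Z)"
        unfolding in_closure_of
      proof (intro conjI z allI impI)
        fix T assume T: "z \<in> T \<and> openin Xbar T"
        have op: "openin (prod_topology Xbar (top_of_set {0..1::real}))
             {p \<in> topspace (prod_topology Xbar (top_of_set {0..1::real})). H p \<in> T}"
          using Hc T openin_continuous_map_preimage by blast
        have "(z,0) \<in> {p \<in> topspace (prod_topology Xbar (top_of_set {0..1::real})). H p \<in> T}"
          using z T H0 by auto
        then obtain U V where UV: "openin Xbar U" "openin (top_of_set {0..1::real}) V"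
          "z \<in> U" "0 \<in> V" "U \<times> V \<subseteq> {p \<in> topspace (prod_topology Xbar (top_of_set {0..1::real})). H p \<in> T}"
          using op unfolding openin_prod_topology_alt by blast
        then obtain e where e: "e > 0" "\<forall>x'\<in>{0..1::real}. dist x' 0 < e \<longrightarrow> x' \<in> V"
          unfolding openin_euclidean_subtopology_iff by blast
        define t where "t = min 1 (e/2)"
        have t: "t \<in> {0<..1}" "t \<in> {0..1}" "dist t 0 < e" using e by (auto simp: t_def dist_real_def)
        then have "t \<in> V" using e by blast
        then have "H (z,t) \<in> T" using UV by blast
        moreover have "H (z,t) \<in> topspace Xbar - Z" using Ht t z by blast
        ultimately show "\<exists>y. y \<in> topspace Xbar - Z \<and> y \<in> T" by blast
      qed
    qed
  qed
qed

lemma final: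
  fixes Xbar :: "'a topology" and Z and d :: "'a \<Rightarrow> 'a \<Rightarrow> real"
  assumes XX: "X = topspace Xbar - Z" and F: "proper_metric_space X d \<and>
       compact_space Xbar \<and> Z \<subseteq> topspace Xbar \<and>
       Metric_space.mtopology X d = subtopology Xbar X \<and>
       Xbar closure_of X = topspace Xbar \<and>
       Zset Xbar Z \<and>
       (\<exists>dbar. Metric_space (topspace Xbar) dbar \<and>
              Metric_space.mtopology (topspace Xbar) dbar = Xbar \<and>
              (\<forall>e::real. e > 0 \<longrightarrow> (\<forall>R::real. R > 0 \<longrightarrow> (\<exists>K. compactin (subtopology Xbar X) K \<and>
                 (\<forall>x\<in>X. Metric_space.mball X d x R \<inter> K = {} \<longrightarrow>
                    (\<exists>dl. dl < e \<and> (\<forall>y\<in>Metric_space.mball X d x R.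
                        \<forall>z\<in>Metric_space.mball X d x R. dbar y z \<le> dl)))))))"
  shows "controlled_Z_compactification Xbar Z d"
  unfolding controlled_Z_compactification_def Let_def XX[symmetric] by (rule F)

theorem lemma12:
  fixes G :: "('g, 'b) monoid_scheme" and \<phi> :: "'g \<Rightarrow> 'a \<Rightarrow> 'a"
    and Xbar :: "'a topology" and Z :: "'a set" and d :: "'a \<Rightarrow> 'a \<Rightarrow> real"
  assumes "Z_structure G \<phi> Xbar Z d"
  shows "controlled_Z_compactification Xbar Z d"
proof -
  define X where "X = topspace Xbar - Z"
  have A: "compact_space Xbar" "AR Xbar" "Z \<subseteq> topspace Xbar" "Zset Xbar Z"
       "proper_metric_space X d" "Metric_space.mtopology X d = subtopology Xbar X"
       "group G" "group_action G X \<phi>"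
       "\<forall>g\<in>carrier G. \<forall>x\<in>X. \<forall>y\<in>X. d (\<phi> g x) (\<phi> g y) = d x y"
       "\<exists>K. compactin (subtopology Xbar X) K \<and> (\<Union>g\<in>carrier G. \<phi> g ` K) = X"
       "\<forall>C \<U>. compactin (subtopology Xbar X) C \<and> (\<forall>U\<in>\<U>. openin Xbar U) \<and>
              \<Union>\<U> = topspace Xbar \<longrightarrow>
              finite {g \<in> carrier G. \<not> (\<exists>U\<in>\<U>. \<phi> g ` C \<subseteq> U)}"
    by (insert assms[unfolded Z_structure_def Let_def X_def[symmetric]], (elim conjE, assumption)+)
  interpret M: Metric_space X d using A(5) unfolding proper_metric_space_def by blast
  interpret GA: group_action G X \<phi> by (rule A(8))
  have pms: "\<And>x r. x \<in> X \<Longrightarrow> compactin M.mtopology (M.mcball x r)"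
    using A(5) unfolding proper_metric_space_def by blast
  have iso: "\<And>g x y. g \<in> carrier G \<Longrightarrow> x \<in> X \<Longrightarrow> y \<in> X \<Longrightarrow> d (\<phi> g x) (\<phi> g y) = d x y"
    using A(9) by blast
  have cont: "continuous_map M.mtopology M.mtopology (\<phi> g)" if g: "g \<in> carrier G" for g
    unfolding M.metric_continuous_map[OF M.Metric_space_axioms]
  proof (intro conjI ballI allI impI)
    show "\<phi> g ` X \<subseteq> X" using GA.surj_prop g by blast
  next
    fix a and \<epsilon>::real assume "a \<in> X" "\<epsilon> > 0"
    then show "\<exists>\<delta>>0. \<forall>x. x \<in> X \<and> d a x < \<delta> \<longrightarrow> d (\<phi> g a) (\<phi> g x) < \<epsilon>"
      using iso g by (intro exI[of _ \<epsilon>]) auto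
  qed
  obtain dbar where db: "Metric_space (topspace Xbar) dbar"
      "Metric_space.mtopology (topspace Xbar) dbar = Xbar"
  proof -
    have "metrizable_space Xbar" using A(2) unfolding AR_def by blast
    then obtain M' d' where "Metric_space M' d'" "Xbar = Metric_space.mtopology M' d'"
      unfolding metrizable_space_def by blast
    moreover then have "topspace Xbar = M'" using Metric_space.topspace_mtopology by metis
    ultimately show ?thesis using that by metis
  qed
  interpret D: Metric_space "topspace Xbar" dbar by (rule db(1))
  have control: "\<exists>K. compactin (subtopology Xbar X) K \<and>
                 (\<forall>x\<in>X. M.mball x R \<inter> K = {} \<longrightarrow>
                    (\<exists>\<delta><\<epsilon>. \<forall>y\<in>M.mball x R. \<forall>z\<in>M.mball x R. dbar y z \<le> \<delta>))"
    if \<epsilon>: "\<epsilon> > 0" and R: "R > 0" for \<epsilon> R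
  proof (cases "X = {}")
    case True
    then show ?thesis by (intro exI[of _ "{}"]) auto
  next
    case False
    obtain K0 where K0: "compactin M.mtopology K0" "(\<Union>g\<in>carrier G. \<phi> g ` K0) = X"
      using A(10) A(6) by auto
    obtain k0 where k0: "k0 \<in> K0" using K0(2) False by blast
    have K0X: "K0 \<subseteq> X" using K0(1) compactin_subset_topspace M.topspace_mtopology by metis
    have "M.mbounded K0" using M.compactin_imp_mbounded K0(1) by blast
    then obtain B where B: "\<forall>x\<in>K0. \<forall>y\<in>K0. d x y \<le> B" unfolding M.mbounded_alt by blast
    define C where "C = M.mcball k0 (B + R)"
    have Cc: "compactin M.mtopology C" unfolding C_def using pms k0 K0X by blast
    have ballC: "M.mball k R \<subseteq> C" if "k \<in> K0" for k
    proof
      fix y assume "y \<in> M.mball k R"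
      then have "y \<in> X" "d k y < R" by auto
      moreover have "d k0 k \<le> B" using B k0 that by blast
      moreover have "d k0 y \<le> d k0 k + d k y" using M.triangle k0 K0X that \<open>y \<in> X\<close> by blast
      ultimately show "y \<in> C" unfolding C_def using k0 K0X by auto
    qed
    define \<U> where "\<U> = (\<lambda>p. D.mball p (\<epsilon>/3)) ` topspace Xbar"
    have Uop: "\<forall>U\<in>\<U>. openin Xbar U"
    proof
      fix U assume "U \<in> \<U>"
      then obtain p where "U = D.mball p (\<epsilon>/3)" unfolding \<U>_def by blast
      then show "openin Xbar U" using D.openin_mball[of p "\<epsilon>/3"] db(2) by simp
    qed
    have Ucov: "\<Union>\<U> = topspace Xbar"
    proof
      show "\<Union>\<U> \<subseteq> topspace Xbar" unfolding \<U>_def by auto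
      show "topspace Xbar \<subseteq> \<Union>\<U>"
      proof
        fix x assume x: "x \<in> topspace Xbar"
        then have "x \<in> D.mball x (\<epsilon>/3)" using \<epsilon> by simp
        moreover have "D.mball x (\<epsilon>/3) \<in> \<U>" unfolding \<U>_def using x by blast
        ultimately show "x \<in> \<Union>\<U>" by blast
      qed
    qed
    define F where "F = {g \<in> carrier G. \<not> (\<exists>U\<in>\<U>. \<phi> g ` C \<subseteq> U)}"
    have Ffin: "finite F" unfolding F_def using A(11)[rule_format, of C \<U>] Cc A(6) Uop Ucov by simp
    define K where "K = (\<Union>g\<in>F. \<phi> g ` C)"
    have Kc: "compactin (subtopology Xbar X) K"
      unfolding K_def A(6)[symmetric]
    proof (rule compactin_Union)
      show "finite ((\<lambda>g. \<phi> g ` C) ` F)" using Ffin by simp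
    next
      fix S assume "S \<in> (\<lambda>g. \<phi> g ` C) ` F"
      then obtain g where g: "g \<in> carrier G" "S = \<phi> g ` C" unfolding F_def by blast
      show "compactin M.mtopology S" unfolding g(2) by (rule image_compactin[OF Cc cont[OF g(1)]])
    qed
    show ?thesis
    proof (intro exI[of _ K] conjI Kc ballI impI)
      fix x assume x: "x \<in> X" and disj: "M.mball x R \<inter> K = {}"
      obtain g k where gk: "g \<in> carrier G" "k \<in> K0" "x = \<phi> g k" using K0(2) x by blast
      have sub: "M.mball x R \<subseteq> \<phi> g ` C"
      proof
        fix y assume y: "y \<in> M.mball x R"
        then have yX: "y \<in> X" by auto
        obtain y' where y': "y' \<in> X" "\<phi> g y' = y" using GA.bij_prop1[OF gk(1) yX] by blast
        have "d k y' = d x y" using iso[OF gk(1), of k y'] gk K0X y' by auto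
        then have "y' \<in> M.mball k R" using y y' gk K0X by auto
        then show "y \<in> \<phi> g ` C" using ballC[OF gk(2)] y' by blast
      qed
      have "g \<notin> F"
      proof
        assume "g \<in> F"
        then have "x \<in> K" using sub x R unfolding K_def by auto
        then show False using disj x R by auto
      qed
      then obtain p where p: "p \<in> topspace Xbar" "\<phi> g ` C \<subseteq> D.mball p (\<epsilon>/3)"
        using gk(1) unfolding F_def \<U>_def by blast
      show "\<exists>\<delta><\<epsilon>. \<forall>y\<in>M.mball x R. \<forall>z\<in>M.mball x R. dbar y z \<le> \<delta>"
      proof (intro exI[of _ "2*\<epsilon>/3"] conjI ballI)
        show "2*\<epsilon>/3 < \<epsilon>" using \<epsilon> by simp
        fix y z assume "y \<in> M.mball x R" "z \<in> M.mball x R"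
        then have "y \<in> D.mball p (\<epsilon>/3)" "z \<in> D.mball p (\<epsilon>/3)" using sub p by blast+
        then have "dbar p y < \<epsilon>/3" "dbar p z < \<epsilon>/3" "y \<in> topspace Xbar" "z \<in> topspace Xbar" by auto
        moreover have "dbar y z \<le> dbar y p + dbar p z" using D.triangle p(1) calculation by blast
        moreover have "dbar y p = dbar p y" using D.commute by blast
        ultimately show "dbar y z \<le> 2*\<epsilon>/3" by linarith
      qed
    qed
  qed
  have cl: "Xbar closure_of X = topspace Xbar" unfolding X_def by (rule closure_part[OF A(4)])
  have ctl: "\<forall>e::real. e > 0 \<longrightarrow> (\<forall>R::real. R > 0 \<longrightarrow> (\<exists>K. compactin (subtopology Xbar X) K \<and>
                 (\<forall>x\<in>X. Metric_space.mball X d x R \<inter> K = {} \<longrightarrow>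
                    (\<exists>dl. dl < e \<and> (\<forall>y\<in>Metric_space.mball X d x R.
                        \<forall>z\<in>Metric_space.mball X d x R. dbar y z \<le> dl)))))"
    using control by blast
  have fin: "proper_metric_space X d \<and>
       compact_space Xbar \<and> Z \<subseteq> topspace Xbar \<and>
       Metric_space.mtopology X d = subtopology Xbar X \<and>
       Xbar closure_of X = topspace Xbar \<and>
       Zset Xbar Z \<and>
       (\<exists>dbar. Metric_space (topspace Xbar) dbar \<and>
              Metric_space.mtopology (topspace Xbar) dbar = Xbar \<and>
              (\<forall>e::real. e > 0 \<longrightarrow> (\<forall>R::real. R > 0 \<longrightarrow> (\<exists>K. compactin (subtopology Xbar X) K \<and>
                 (\<forall>x\<in>X. Metric_space.mball X d x R \<inter> K = {} \<longrightarrow>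
                    (\<exists>dl. dl < e \<and> (\<forall>y\<in>Metric_space.mball X d x R.
                        \<forall>z\<in>Metric_space.mball X d x R. dbar y z \<le> dl)))))))"
    apply (intro conjI A(1) A(3) A(4) A(5) A(6) cl)
    apply (rule exI[of _ dbar])
    apply (intro conjI db(1) db(2))
    apply (rule ctl)
    done
  show ?thesis by (rule final[OF X_def fin])
qed

end
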